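(* Monitor-triggered temporal logic is strictly more expressive than LTL: for every LTL formula $\phi$ over ${\cal P}$ there is a monitor-triggered formula satisfied by exactly the same infinite traces over $2^{\cal P}$, and there is a monitor-triggered formula whose set of satisfying infinite traces is not the set of satisfying traces of any LTL formula.
   Context: Let ${\cal P}={\cal P}_{in}\cup{\cal P}_{out}$ be a set of propositions. Infinite traces $\sigma=\sigma_0\sigma_1\cdots$ have letters $\sigma_i\subseteq{\cal P}$; $\sigma_{i,j}=\sigma_i\cdots\sigma_j$ and $\sigma_{i,\infty}$ is the suffix from $i$. LTL: $\phi ::= \mathit{tt}\mid\mathit{ff}\mid e\mid\neg e\mid\phi\wedge\phi\mid\phi\vee\phi\mid X\phi\mid\phi U\phi\mid G\phi$ with the standard infinite-trace semantics. Co-safety LTL: the fragment without $G$. Finite-trace semantics of co-safety formulas on $\sigma_{i,j}$ ($j<\infty$): atoms and Boolean connectives evaluated at position $i$ as usual; $\sigma_{i,j}\vdash X\varphi$ iff $j>i$ and $\sigma_{i+1,j}\vdash\varphi$; $\sigma_{i,j}\vdash\varphi U\psi$ iff some $l\in[i,j]$ has $\sigma_{l,j}\vdash\psi$ and $\sigma_{k,j}\vdash\varphi$ for all $k\in[i,l)$. Tight satisfaction $\sigma_{i,j}\Vdash\varphi$: $\sigma_{i,j}\vdash\varphi$ and no $\sigma_{i,k}$ with $i\le k<j$ satisfies $\varphi$. Flagging monitor over $\Sigma=2^{{\cal P}_{in}}$: a tuple $D=\langle \Sigma, \mathbb{V}, \Theta, Q, \theta_0, q_0, F, \perp, \rightarrow\rangle$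 with typed variables $\mathbb{V}$ (arbitrary domains), valuations $\Theta$, finite states $Q$, initial valuation $\theta_0$, initial state $q_0$, flagging states $F\subseteq Q\setminus\{q_0\}$, sink $\perp$, and deterministic transitions $q\xrightarrow{g\mapsto a}q'$ ($q\ne\perp$) with guards $g:\Sigma\times\Theta\to\{\mathit{true},\mathit{false}\}$ and actions $a:\Sigma\times\Theta\to\Theta$. Semantics on configurations $(q,\theta)$ reading $E$: (1) if $q\notin F\cup\{\perp\}$ and a transition from $q$ has true guard, take it and set the valuation to $a(E,\theta)$; (2) if $q\notin F\cup\{\perp\}$ and no guard holds, stay; (3) $\perp$ stays; (4) a state of $F$ moves to $\perp$. On a trace over $2^{\cal P}$ the monitor reads the events $\sigma_i\cap{\cal P}_{in}$. $\sigma_{i,j}\Vdash D$ iff the run from $(q_0,\theta_0)$ on $\sigma_i,\dots,\sigma_j$ ends in a state of $F$. Monitor-triggered formulas: $\pi' ::= D{:}\phi\mid(D;\varphi)^*$ and $\pi ::= \phi\rightarrow\pi'$, with $D$ a monitor, $\phi$ LTL, $\varphi$ co-safety LTL. Semantics: $\sigma_{i,\infty}\vdash D{:}\phi$ iff for all $j\ge i$, $\sigma_{i,j}\Vdash D$ implies $\sigma_{j,\infty}\vdash\phi$. $\sigma_{i,k}\vdash D;\varphi$ iff there is $j\in[i,k]$ with $\sigma_{i,j}\Vdash D$ and $\sigma_{j,k}\Vdash\varphi$. Define restart points of $\sigma$: $0$ is one, and if $p$ is one and $\sigma_{p,k}\vdash D;\varphi$ then $k+1$ is one. $\sigma\vdash(D;\varphi)^*$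 iff for every restart point $p$ and every $i\ge p$ with $\sigma_{p,i}\Vdash D$ there is $k\ge i$ with $\sigma_{p,k}\vdash D;\varphi$. $\sigma\vdash\phi\rightarrow\pi'$ iff $\sigma\vdash\phi$ implies $\sigma\vdash\pi'$. $\sigma\vdash\pi'$ means $\sigma_{0,\infty}\vdash\pi'$. *)

theory Defs
  imports Main
begin

datatype 'p ltl =
    TT | FF | Prop 'p | NProp 'p
  | And "'p ltl" "'p ltl" | Or "'p ltl" "'p ltl"
  | Next "'p ltl" | Until "'p ltl" "'p ltl" | Glob "'p ltl"

type_synonym 'p trace = "nat \<Rightarrow> 'p set"

fun ltl_sat :: "'p trace \<Rightarrow> nat \<Rightarrow> 'p ltl \<Rightarrow> bool" where
  "ltl_sat s i TT = True"
| "ltl_sat s i FF = False"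
| "ltl_sat s i (Prop e) = (e \<in> s i)"
| "ltl_sat s i (NProp e) = (e \<notin> s i)"
| "ltl_sat s i (And a b) = (ltl_sat s i a \<and> ltl_sat s i b)"
| "ltl_sat s i (Or a b) = (ltl_sat s i a \<or> ltl_sat s i b)"
| "ltl_sat s i (Next a) = ltl_sat s (Suc i) a"
| "ltl_sat s i (Until a b) =
     (\<exists>l\<ge>i. ltl_sat s l b \<and> (\<forall>k. i \<le> k \<and> k < l \<longrightarrow> ltl_sat s k a))"
| "ltl_sat s i (Glob a) = (\<forall>k\<ge>i. ltl_sat s k a)"

fun cosafety :: "'p ltl \<Rightarrow> bool" where
  "cosafety (And a b) = (cosafety a \<and> cosafety b)"
| "cosafety (Or a b) = (cosafety a \<and> cosafety b)"
| "cosafety (Next a) = cosafety a"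
| "cosafety (Until a b) = (cosafety a \<and> cosafety b)"
| "cosafety (Glob a) = False"
| "cosafety _ = True"

fun fin_sat :: "'p trace \<Rightarrow> nat \<Rightarrow> nat \<Rightarrow> 'p ltl \<Rightarrow> bool" where
  "fin_sat s i j TT = True"
| "fin_sat s i j FF = False"
| "fin_sat s i j (Prop e) = (e \<in> s i)"
| "fin_sat s i j (NProp e) = (e \<notin> s i)"
| "fin_sat s i j (And a b) = (fin_sat s i j a \<and> fin_sat s i j b)"
| "fin_sat s i j (Or a b) = (fin_sat s i j a \<or> fin_sat s i j b)"
| "fin_sat s i j (Next a) = (j > i \<and> fin_sat s (Suc i) j a)"
| "fin_sat s i j (Until a b) =
     (\<exists>l. i \<le> l \<and> l \<le> j \<and> fin_sat s l j b \<and> (\<forall>k. i \<le> k \<and> k < l \<longrightarrow> fin_sat s k j a))"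
| "fin_sat s i j (Glob a) = False" \<comment> \<open>never used: only co-safety formulas are evaluated finitely\<close>

definition tight_sat :: "'p trace \<Rightarrow> nat \<Rightarrow> nat \<Rightarrow> 'p ltl \<Rightarrow> bool" where
  "tight_sat s i j phi \<longleftrightarrow> fin_sat s i j phi \<and> (\<forall>k. i \<le> k \<and> k < j \<longrightarrow> \<not> fin_sat s i k phi)"

text \<open>Events are subsets of P_in; 'v is the type of valuations of the (typed) monitor variables,
  'q the type of control states.\<close>
record ('p, 'q, 'v) monitor =
  states :: "'q set"
  init_val :: 'v
  init :: 'q
  flags :: "'q set"
  sink :: 'q
  trans :: "('q \<times> ('p set \<Rightarrow> 'v \<Rightarrow> bool) \<times> ('p set \<Rightarrow> 'v \<Rightarrow> 'v) \<times> 'q) set"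

definition wf_monitor :: "'p set \<Rightarrow> ('p, 'q, 'v) monitor \<Rightarrow> bool" where
  "wf_monitor Pin D \<longleftrightarrow>
     finite (states D) \<and> init D \<in> states D \<and> sink D \<in> states D \<and>
     flags D \<subseteq> states D - {init D} \<and> sink D \<notin> flags D \<and>
     (\<forall>q g a q'. (q, g, a, q') \<in> trans D \<longrightarrow> q \<in> states D \<and> q' \<in> states D \<and> q \<noteq> sink D) \<and>
     (\<forall>q g1 a1 q1 g2 a2 q2 E th. E \<subseteq> Pin \<and>
        (q, g1, a1, q1) \<in> trans D \<and> (q, g2, a2, q2) \<in> trans D \<and> g1 E th \<and> g2 E th \<longrightarrow>
        (g1, a1, q1) = (g2, a2, q2))"

definition mstep :: "('p, 'q, 'v) monitor \<Rightarrow> 'p set \<Rightarrow> 'q \<times> 'v \<Rightarrow> 'q \<times> 'v" where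
  "mstep D E c = (let (q, th) = c in
     if q = sink D then (q, th)
     else if q \<in> flags D then (sink D, th)
     else if (\<exists>g a q'. (q, g, a, q') \<in> trans D \<and> g E th) then
       (let (g, a, q') = (THE t. (q, t) \<in> trans D \<and> fst t E th) in (q', a E th))
     else (q, th))"

text \<open>Configuration after reading n events sigma_i .. sigma_(i+n-1), each restricted to P_in.\<close>
fun mrun :: "'p set \<Rightarrow> ('p, 'q, 'v) monitor \<Rightarrow> 'p trace \<Rightarrow> nat \<Rightarrow> nat \<Rightarrow> 'q \<times> 'v" where
  "mrun Pin D s i 0 = (init D, init_val D)"
| "mrun Pin D s i (Suc n) = mstep D (s (i + n) \<inter> Pin) (mrun Pin D s i n)"

definition mon_tight :: "'p set \<Rightarrow> ('p, 'q, 'v) monitor \<Rightarrow> 'p trace \<Rightarrow> nat \<Rightarrow> nat \<Rightarrow> bool" where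
  "mon_tight Pin D s i j \<longleftrightarrow> i \<le> j \<and> fst (mrun Pin D s i (Suc (j - i))) \<in> flags D"

datatype ('p, 'q, 'v) mtrig =
    Trig "('p, 'q, 'v) monitor" "'p ltl"
  | Star "('p, 'q, 'v) monitor" "'p ltl"

datatype ('p, 'q, 'v) mtl = Impl "'p ltl" "('p, 'q, 'v) mtrig"

fun wf_mtrig :: "'p set \<Rightarrow> ('p, 'q, 'v) mtrig \<Rightarrow> bool" where
  "wf_mtrig Pin (Trig D phi) = wf_monitor Pin D"
| "wf_mtrig Pin (Star D phi) = (wf_monitor Pin D \<and> cosafety phi)"

fun wf_mtl :: "'p set \<Rightarrow> ('p, 'q, 'v) mtl \<Rightarrow> bool" where
  "wf_mtl Pin (Impl phi p) = wf_mtrig Pin p"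

definition seq_sat :: "'p set \<Rightarrow> ('p, 'q, 'v) monitor \<Rightarrow> 'p ltl \<Rightarrow> 'p trace \<Rightarrow> nat \<Rightarrow> nat \<Rightarrow> bool" where
  "seq_sat Pin D phi s i k \<longleftrightarrow>
     (\<exists>j. i \<le> j \<and> j \<le> k \<and> mon_tight Pin D s i j \<and> tight_sat s j k phi)"

inductive restart :: "'p set \<Rightarrow> ('p, 'q, 'v) monitor \<Rightarrow> 'p ltl \<Rightarrow> 'p trace \<Rightarrow> nat \<Rightarrow> bool"
  for Pin D phi s where
  restart0: "restart Pin D phi s 0"
| restartS: "restart Pin D phi s p \<Longrightarrow> seq_sat Pin D phi s p k \<Longrightarrow> restart Pin D phi s (Suc k)"

fun mtrig_sat :: "'p set \<Rightarrow> 'p trace \<Rightarrow> ('p, 'q, 'v) mtrig \<Rightarrow> bool" where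
  "mtrig_sat Pin s (Trig D phi) =
     (\<forall>j. mon_tight Pin D s 0 j \<longrightarrow> ltl_sat s j phi)"
| "mtrig_sat Pin s (Star D phi) =
     (\<forall>p. restart Pin D phi s p \<longrightarrow>
        (\<forall>i\<ge>p. mon_tight Pin D s p i \<longrightarrow> (\<exists>k\<ge>i. seq_sat Pin D phi s p k)))"

fun mtl_sat :: "'p set \<Rightarrow> 'p trace \<Rightarrow> ('p, 'q, 'v) mtl \<Rightarrow> bool" where
  "mtl_sat Pin s (Impl phi p) = (ltl_sat s 0 phi \<longrightarrow> mtrig_sat Pin s p)"

end

theory Submission
  imports Defs
begin

definition D0 :: "('p, nat, nat) monitor" where
  "D0 = \<lparr>states = {0,1,2}, init_val = 0, init = 0, flags = {1}, sink = 2,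
         trans = {(0, \<lambda>E th. True, \<lambda>E th. th, 1)}\<rparr>"

lemma wf_D0: "wf_monitor Pin D0"
  unfolding wf_monitor_def D0_def by auto

lemma init_D0: "init D0 = 0" "init_val D0 = 0" by (simp_all add: D0_def)

lemma mstep0: "mstep D0 E (0, th) = (Suc 0, th)"
proof -
  have "(THE t. (0::nat, t) \<in> trans D0 \<and> fst t E th) = ((\<lambda>E th. True), (\<lambda>E th. th), Suc 0)"
    by (rule the_equality) (auto simp: D0_def)
  then show ?thesis unfolding mstep_def by (auto simp: D0_def)
qed

lemma mstep1: "mstep D0 E (Suc 0, th) = (2, th)"
  unfolding mstep_def by (simp add: D0_def)

lemma mstep2: "mstep D0 E (2, th) = (2, th)"
  unfolding mstep_def by (simp add: D0_def)

lemma mrun_D0: "mrun Pin D0 s i n = (if n = 0 then 0 else if n = Suc 0 then Suc 0 else 2, 0)"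
proof (induction n)
  case 0 then show ?case by (simp add: D0_def)
next
  case (Suc n)
  show ?case
  proof (cases n)
    case 0
    with 0 show ?thesis by (simp add: mstep0 init_D0)
  next
    case (Suc n')
    then show ?thesis using Suc.IH by (cases n') (auto simp: mstep1 mstep2)
  qed
qed

lemma mon_tight_D0: "mon_tight Pin D0 s i j \<longleftrightarrow> j = i"
  unfolding mon_tight_def mrun_D0 by (auto simp: D0_def)

lemma part1: "wf_mtl Pin (Impl TT (Trig D0 phi)) \<and> (\<forall>s. mtl_sat Pin s (Impl TT (Trig D0 phi)) \<longleftrightarrow> ltl_sat s 0 phi)"
  by (auto simp: wf_D0 mon_tight_D0)

definition phiE :: "'p \<Rightarrow> 'p ltl" where "phiE e = And (Prop e) (Next TT)"

lemma tight_phiE: "tight_sat s p k (phiE e) \<longleftrightarrow> e \<in> s p \<and> k = Suc p"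
proof
  assume H: "tight_sat s p k (phiE e)"
  then have "e \<in> s p" "k > p" unfolding tight_sat_def phiE_def by auto
  moreover have "\<not> k > Suc p"
  proof
    assume "k > Suc p"
    then have "fin_sat s p (Suc p) (phiE e)" "p \<le> Suc p \<and> Suc p < k" using \<open>e \<in> s p\<close> by (auto simp: phiE_def)
    then show False using H unfolding tight_sat_def by blast
  qed
  ultimately show "e \<in> s p \<and> k = Suc p" by auto
next
  assume "e \<in> s p \<and> k = Suc p"
  then show "tight_sat s p k (phiE e)" unfolding tight_sat_def phiE_def by auto
qed

lemma seq_phiE: "seq_sat Pin D0 (phiE e) s p k \<longleftrightarrow> e \<in> s p \<and> k = Suc p"
  unfolding seq_sat_def by (auto simp: mon_tight_D0 tight_phiE)

lemma restart_imp: "restart Pin D0 (phiE e) s p \<Longrightarrow> even p \<and> (\<forall>q<p. even q \<longrightarrow> e \<in> s q)"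
proof (induction rule: restart.induct)
  case restart0 then show ?case by simp
next
  case (restartS p k)
  then show ?case by (auto simp: seq_phiE less_Suc_eq)
qed

lemma restart_even: "(\<forall>q<2*m. even q \<longrightarrow> e \<in> s q) \<Longrightarrow> restart Pin D0 (phiE e) s (2*m)"
proof (induction m)
  case 0 then show ?case by (simp add: restart0)
next
  case (Suc m)
  then have r: "restart Pin D0 (phiE e) s (2*m)" by auto
  have "e \<in> s (2*m)" using Suc.prems by auto
  then have "seq_sat Pin D0 (phiE e) s (2*m) (Suc (2*m))" by (simp add: seq_phiE)
  from restartS[OF r this] show ?case by simp
qed

lemma star_char: "mtrig_sat Pin s (Star D0 (phiE e)) \<longleftrightarrow> (\<forall>p. even p \<longrightarrow> e \<in> s p)"
proof
  assume H: "mtrig_sat Pin s (Star D0 (phiE e))"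
  show "\<forall>p. even p \<longrightarrow> e \<in> s p"
  proof (intro allI impI)
    fix p :: nat assume "even p"
    show "e \<in> s p"
    proof (rule ccontr)
      assume nb: "e \<notin> s p"
      define q where "q = (LEAST q. even q \<and> e \<notin> s q)"
      have q1: "even q \<and> e \<notin> s q" unfolding q_def by (rule LeastI[of _ p]) (use \<open>even p\<close> nb in auto)
      have q2: "\<forall>r<q. even r \<longrightarrow> e \<in> s r" unfolding q_def using not_less_Least by blast
      obtain m where qm: "q = 2*m" using q1 by auto
      have "restart Pin D0 (phiE e) s q" using restart_even[of m e s] q2 qm by auto
      with H have "\<exists>k\<ge>q. seq_sat Pin D0 (phiE e) s q k" by (auto simp: mon_tight_D0)
      then show False using q1 by (auto simp: seq_phiE)
    qed
  qed
next
  assume "\<forall>p. even p \<longrightarrow> e \<in> s p"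
  then show "mtrig_sat Pin s (Star D0 (phiE e))"
    by (auto simp: mon_tight_D0 seq_phiE dest: restart_imp)
qed

definition w :: "'p \<Rightarrow> nat \<Rightarrow> 'p trace" where
  "w e k = (\<lambda>i. if i = k then {} else {e})"

lemma shift: "ltl_sat s (Suc m) phi = ltl_sat (\<lambda>n. s (Suc n)) m phi"
proof (induction phi arbitrary: m)
  case (Until a b)
  show ?case
  proof
    assume "ltl_sat s (Suc m) (Until a b)"
    then obtain l where l: "l \<ge> Suc m" "ltl_sat s l b" "\<forall>k. Suc m \<le> k \<and> k < l \<longrightarrow> ltl_sat s k a" by auto
    then obtain l' where l': "l = Suc l'" by (cases l) auto
    have 1: "ltl_sat (\<lambda>n. s (Suc n)) l' b" using l l' Until.IH(2) by simp
    have 2: "\<forall>k. m \<le> k \<and> k < l' \<longrightarrow> ltl_sat (\<lambda>n. s (Suc n)) k a"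
    proof (intro allI impI)
      fix k assume "m \<le> k \<and> k < l'"
      then have "ltl_sat s (Suc k) a" using l l' by simp
      then show "ltl_sat (\<lambda>n. s (Suc n)) k a" using Until.IH(1) by simp
    qed
    show "ltl_sat (\<lambda>n. s (Suc n)) m (Until a b)" using 1 2 l l' by auto
  next
    assume "ltl_sat (\<lambda>n. s (Suc n)) m (Until a b)"
    then obtain l where l: "l \<ge> m" "ltl_sat (\<lambda>n. s (Suc n)) l b" "\<forall>k. m \<le> k \<and> k < l \<longrightarrow> ltl_sat (\<lambda>n. s (Suc n)) k a" by auto
    have 1: "ltl_sat s (Suc l) b" using l Until.IH(2) by simp
    have 2: "\<forall>k. Suc m \<le> k \<and> k < Suc l \<longrightarrow> ltl_sat s k a"
    proof (intro allI impI)
      fix k assume k: "Suc m \<le> k \<and> k < Suc l"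
      then obtain k' where k': "k = Suc k'" by (cases k) auto
      then have "ltl_sat (\<lambda>n. s (Suc n)) k' a" using l k by simp
      then show "ltl_sat s k a" using Until.IH(1) k' by simp
    qed
    show "ltl_sat s (Suc m) (Until a b)" using 1 2 l by auto
  qed
next
  case (Glob a)
  show ?case
  proof
    assume H: "ltl_sat s (Suc m) (Glob a)"
    show "ltl_sat (\<lambda>n. s (Suc n)) m (Glob a)"
    proof (simp only: ltl_sat.simps, intro allI impI)
      fix k assume "k \<ge> m"
      then have "ltl_sat s (Suc k) a" using H by simp
      then show "ltl_sat (\<lambda>n. s (Suc n)) k a" using Glob.IH by simp
    qed
  next
    assume H: "ltl_sat (\<lambda>n. s (Suc n)) m (Glob a)"
    show "ltl_sat s (Suc m) (Glob a)"
    proof (simp only: ltl_sat.simps, intro allI impI)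
      fix k assume k: "k \<ge> Suc m"
      then obtain k' where k': "k = Suc k'" by (cases k) auto
      then have "ltl_sat (\<lambda>n. s (Suc n)) k' a" using H k by simp
      then show "ltl_sat s k a" using Glob.IH k' by simp
    qed
  qed
qed auto

lemma w_shift: "ltl_sat (w e (Suc k)) (Suc m) phi = ltl_sat (w e k) m phi"
proof -
  have "(\<lambda>n. w e (Suc k) (Suc n)) = w e k" by (auto simp: w_def)
  then show ?thesis by (simp add: shift)
qed

lemma key: "k > size phi \<Longrightarrow> ltl_sat (w e k) 0 phi = ltl_sat (w e (Suc k)) 0 phi"
proof (induction phi arbitrary: k)
  case (Prop x) then show ?case by (auto simp: w_def)
next
  case (NProp x) then show ?case by (auto simp: w_def)
next
  case (Next a)
  then obtain k' where k: "k = Suc k'" and kk: "k' > size a" by (cases k) auto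
  have "ltl_sat (w e k) 0 (Next a) = ltl_sat (w e k') 0 a" using k w_shift[of e k' 0 a] by simp
  also have "\<dots> = ltl_sat (w e k) 0 a" using Next.IH[OF kk] k by simp
  also have "\<dots> = ltl_sat (w e (Suc k)) 0 (Next a)" using w_shift[of e k 0 a] by simp
  finally show ?case .
next
  case (Until a b)
  have IHa: "ltl_sat (w e k) 0 a = ltl_sat (w e (Suc k)) 0 a" by (rule Until.IH(1)) (use Until.prems in simp)
  have IHb: "ltl_sat (w e k) 0 b = ltl_sat (w e (Suc k)) 0 b" by (rule Until.IH(2)) (use Until.prems in simp)
  show ?case
  proof
    assume "ltl_sat (w e k) 0 (Until a b)"
    then obtain l where l1: "ltl_sat (w e k) l b" and l2: "\<And>m. m < l \<Longrightarrow> ltl_sat (w e k) m a" by auto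
    show "ltl_sat (w e (Suc k)) 0 (Until a b)"
    proof (cases "l = 0")
      case True then show ?thesis using l1 IHb by auto
    next
      case False
      have b1: "ltl_sat (w e (Suc k)) (Suc l) b" using l1 w_shift[of e k l b] by simp
      have a1: "ltl_sat (w e (Suc k)) m a" if ml: "m < Suc l" for m
      proof (cases m)
        case 0
        have "ltl_sat (w e k) 0 a" using l2[of 0] False by simp
        then show ?thesis using 0 IHa by simp
      next
        case (Suc m')
        have "m' < l" using ml Suc by simp
        then have "ltl_sat (w e k) m' a" by (rule l2)
        then show ?thesis using Suc w_shift[of e k m' a] by simp
      qed
      have "\<exists>l\<ge>0. ltl_sat (w e (Suc k)) l b \<and> (\<forall>j. 0 \<le> j \<and> j < l \<longrightarrow> ltl_sat (w e (Suc k)) j a)"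
        using b1 a1 by blast
      then show ?thesis by (simp only: ltl_sat.simps)
    qed
  next
    assume "ltl_sat (w e (Suc k)) 0 (Until a b)"
    then obtain l where l1: "ltl_sat (w e (Suc k)) l b" and l2: "\<And>m. m < l \<Longrightarrow> ltl_sat (w e (Suc k)) m a" by auto
    show "ltl_sat (w e k) 0 (Until a b)"
    proof (cases l)
      case 0 then show ?thesis using l1 IHb by auto
    next
      case (Suc l')
      have b1: "ltl_sat (w e k) l' b" using l1 Suc w_shift[of e k l' b] by simp
      have a1: "ltl_sat (w e k) m a" if "m < l'" for m
      proof -
        have "Suc m < l" using that Suc by simp
        then have "ltl_sat (w e (Suc k)) (Suc m) a" by (rule l2)
        then show ?thesis using w_shift[of e k m a] by simp
      qed
      have "\<exists>l\<ge>0. ltl_sat (w e k) l b \<and> (\<forall>m. 0 \<le> m \<and> m < l \<longrightarrow> ltl_sat (w e k) m a)"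
        using b1 a1 by blast
      then show ?thesis by (simp only: ltl_sat.simps)
    qed
  qed
next
  case (Glob a)
  have IHa: "ltl_sat (w e k) 0 a = ltl_sat (w e (Suc k)) 0 a" by (rule Glob.IH) (use Glob.prems in simp)
  show ?case
  proof
    assume H: "ltl_sat (w e k) 0 (Glob a)"
    show "ltl_sat (w e (Suc k)) 0 (Glob a)"
    proof (simp only: ltl_sat.simps, intro allI impI)
      fix m :: nat
      show "ltl_sat (w e (Suc k)) m a"
      proof (cases m)
        case 0 then show ?thesis using H IHa by simp
      next
        case (Suc m')
        have "ltl_sat (w e k) m' a" using H by simp
        then show ?thesis using Suc w_shift[of e k m' a] by simp
      qed
    qed
  next
    assume H: "ltl_sat (w e (Suc k)) 0 (Glob a)"
    show "ltl_sat (w e k) 0 (Glob a)"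
    proof (simp only: ltl_sat.simps, intro allI impI)
      fix m :: nat
      have "ltl_sat (w e (Suc k)) (Suc m) a" using H by simp
      then show "ltl_sat (w e k) m a" using w_shift[of e k m a] by simp
    qed
  qed
next
  case (And a b)
  have "ltl_sat (w e k) 0 a = ltl_sat (w e (Suc k)) 0 a" by (rule And.IH(1)) (use And.prems in simp)
  moreover have "ltl_sat (w e k) 0 b = ltl_sat (w e (Suc k)) 0 b" by (rule And.IH(2)) (use And.prems in simp)
  ultimately show ?case by (simp only: ltl_sat.simps)
next
  case (Or a b)
  have "ltl_sat (w e k) 0 a = ltl_sat (w e (Suc k)) 0 a" by (rule Or.IH(1)) (use Or.prems in simp)
  moreover have "ltl_sat (w e k) 0 b = ltl_sat (w e (Suc k)) 0 b" by (rule Or.IH(2)) (use Or.prems in simp)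
  ultimately show ?case by (simp only: ltl_sat.simps)
qed simp_all

lemma part2: "wf_mtl Pin (Impl TT (Star D0 (phiE e))) \<and>
   (\<forall>phi :: 'p ltl. \<exists>s. mtl_sat Pin s (Impl TT (Star D0 (phiE e))) \<noteq> ltl_sat s 0 phi)"
proof
  show "wf_mtl Pin (Impl TT (Star D0 (phiE e)))" by (simp add: wf_D0 phiE_def)
  show "\<forall>phi :: 'p ltl. \<exists>s. mtl_sat Pin s (Impl TT (Star D0 (phiE e))) \<noteq> ltl_sat s 0 phi"
  proof
    fix phi :: "'p ltl"
    define K where "K = Suc (2 * size phi)"
    have eq: "ltl_sat (w e K) 0 phi = ltl_sat (w e (Suc K)) 0 phi" by (rule key) (simp add: K_def)
    have a: "mtl_sat Pin (w e K) (Impl TT (Star D0 (phiE e)))"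
    proof -
      have "\<forall>p. even p \<longrightarrow> e \<in> w e K p"
      proof (intro allI impI)
        fix p :: nat assume "even p"
        then have "p \<noteq> K" unfolding K_def by auto
        then show "e \<in> w e K p" by (simp add: w_def)
      qed
      then show ?thesis by (simp only: mtl_sat.simps star_char) simp
    qed
    have b: "\<not> mtl_sat Pin (w e (Suc K)) (Impl TT (Star D0 (phiE e)))"
    proof -
      have "even (Suc K)" unfolding K_def by simp
      moreover have "e \<notin> w e (Suc K) (Suc K)" by (simp add: w_def)
      ultimately have "\<not> (\<forall>p. even p \<longrightarrow> e \<in> w e (Suc K) p)" by blast
      then show ?thesis by (simp only: mtl_sat.simps star_char) simp
    qed
    show "\<exists>s. mtl_sat Pin s (Impl TT (Star D0 (phiE e))) \<noteq> ltl_sat s 0 phi"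
    proof (cases "ltl_sat (w e K) 0 phi")
      case True
      then have "mtl_sat Pin (w e (Suc K)) (Impl TT (Star D0 (phiE e))) \<noteq> ltl_sat (w e (Suc K)) 0 phi"
        using b eq by simp
      then show ?thesis by (intro exI[of _ "w e (Suc K)"])
    next
      case False
      then have "mtl_sat Pin (w e K) (Impl TT (Star D0 (phiE e))) \<noteq> ltl_sat (w e K) 0 phi"
        using a by simp
      then show ?thesis by (intro exI[of _ "w e K"])
    qed
  qed
qed

theorem theorem2:
  fixes Pin :: "'p set"
  shows "(\<forall>phi :: 'p ltl. \<exists>pi :: ('p, nat, nat) mtl.
            wf_mtl Pin pi \<and> (\<forall>s. mtl_sat Pin s pi \<longleftrightarrow> ltl_sat s 0 phi))
       \<and> (\<exists>pi :: ('p, nat, nat) mtl. wf_mtl Pin pi \<and>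
            (\<forall>phi :: 'p ltl. \<exists>s. mtl_sat Pin s pi \<noteq> ltl_sat s 0 phi))"
proof (intro conjI allI)
  fix phi :: "'p ltl"
  show "\<exists>pi :: ('p, nat, nat) mtl. wf_mtl Pin pi \<and> (\<forall>s. mtl_sat Pin s pi \<longleftrightarrow> ltl_sat s 0 phi)"
    by (rule exI[of _ "Impl TT (Trig D0 phi)"]) (rule part1)
next
  show "\<exists>pi :: ('p, nat, nat) mtl. wf_mtl Pin pi \<and>
            (\<forall>phi :: 'p ltl. \<exists>s. mtl_sat Pin s pi \<noteq> ltl_sat s 0 phi)"
    by (rule exI[of _ "Impl TT (Star D0 (phiE undefined))"]) (rule part2)
qed

end
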